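(* Let $k,l$ be positive integers and $r:=k+l-1$. Then a set $S_{k,l}$ (in the sense of the recursive definition below) can be chosen to be a subset of $P_r$; more precisely, choosing at each recursive step the translation parameters $\delta_{k',l'}:=\delta_{k'+l'-1}$ and $\delta_{k',l'}':=\delta_{k'+l'-1}'$ yields valid choices (i.e., the required conditions "to the right of" and "high above" hold), and the resulting set $S_{k,l}$ is contained in $P_r$.
   Context: Define finite sets $P_r\subset\mathbb{Z}^2$ for integers $r\ge 0$ recursively: $P_0:=\{(0,0)\}$; for $r\ge 1$, $L_r:=P_{r-1}$, $R_r:=\{(x+\delta_r,\,y+\delta_r'):(x,y)\in L_r\}$ and $P_r:=L_r\cup R_r$, where $\delta_r:=3\cdot 4^{r-1}$ and $\delta_r':=(3r+1)\cdot 4^{r-1}$. For finite point sets $X,Y$ in the plane, $X$ is high above $Y$ if every line determined by two points of $X$ lies strictly above every point of $Y$, and every line determined by two points of $Y$ lies strictly below every point of $X$. The sets $S_{k,l}$ (for positive integers $k,l$) are defined recursively: $S_{k,l}:=\{(0,0)\}$ if $k\le 2$ or $l\le 2$; otherwise $S_{k,l}:=L_{k,l}\cup R_{k,l}$ where $L_{k,l}:=S_{k-1,l}$ and $R_{k,l}:=\{(x+\delta_{k,l},\,y+\delta_{k,l}'):(x,y)\in S_{k,l-1}\}$, with $\delta_{k,l}$ chosen so that every point of $R_{k,l}$ lies strictly to the right of every point of $L_{k,l}$, and $\delta_{k,l}'$ chosen so that $R_{k,l}$ is high above $L_{k,l}$. *)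

theory Defs
  imports Complex_Main
begin

type_synonym point = "int \<times> int"

definition shift :: "int \<Rightarrow> int \<Rightarrow> point \<Rightarrow> point" where
  "shift a b p = (fst p + a, snd p + b)"

definition delta :: "nat \<Rightarrow> int" where
  "delta r = 3 * 4 ^ (r - 1)"

definition delta' :: "nat \<Rightarrow> int" where
  "delta' r = (3 * int r + 1) * 4 ^ (r - 1)"

fun P :: "nat \<Rightarrow> point set" where
  "P 0 = {(0, 0)}"
| "P (Suc r) = P r \<union> shift (delta (Suc r)) (delta' (Suc r)) ` P r"

definition strictly_below_line :: "point \<Rightarrow> point \<Rightarrow> point \<Rightarrow> bool" where
  "strictly_below_line p q z \<longleftrightarrow> fst p \<noteq> fst q \<and>
     real_of_int (snd z) < real_of_int (snd p) +
        real_of_int (snd q - snd p) / real_of_int (fst q - fst p) * real_of_int (fst z - fst p)"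

definition strictly_above_line :: "point \<Rightarrow> point \<Rightarrow> point \<Rightarrow> bool" where
  "strictly_above_line p q z \<longleftrightarrow> fst p \<noteq> fst q \<and>
     real_of_int (snd z) > real_of_int (snd p) +
        real_of_int (snd q - snd p) / real_of_int (fst q - fst p) * real_of_int (fst z - fst p)"

definition high_above :: "point set \<Rightarrow> point set \<Rightarrow> bool" where
  "high_above X Y \<longleftrightarrow>
     (\<forall>p\<in>X. \<forall>q\<in>X. p \<noteq> q \<longrightarrow> (\<forall>y\<in>Y. strictly_below_line p q y)) \<and>
     (\<forall>p\<in>Y. \<forall>q\<in>Y. p \<noteq> q \<longrightarrow> (\<forall>x\<in>X. strictly_above_line p q x))"

definition strictly_right_of :: "point set \<Rightarrow> point set \<Rightarrow> bool" where
  "strictly_right_of R L \<longleftrightarrow> (\<forall>a\<in>L. \<forall>b\<in>R. fst a < fst b)"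

fun S :: "nat \<Rightarrow> nat \<Rightarrow> point set" where
  "S k l = (if k \<le> 2 \<or> l \<le> 2 then {(0, 0)}
            else S (k - 1) l \<union> shift (delta (k + l - 1)) (delta' (k + l - 1)) ` S k (l - 1))"

declare S.simps [simp del]

definition L_part :: "nat \<Rightarrow> nat \<Rightarrow> point set" where
  "L_part k l = S (k - 1) l"

definition R_part :: "nat \<Rightarrow> nat \<Rightarrow> point set" where
  "R_part k l = shift (delta (k + l - 1)) (delta' (k + l - 1)) ` S k (l - 1)"

end

theory Submission imports Defs begin

lemma zero_in_P: "(0,0) \<in> P m" by (induction m) auto

lemma P_Suc_iff: "p \<in> P (Suc m) \<longleftrightarrow> p \<in> P m \<or> (\<exists>u\<in>P m. p = (fst u + 3*4^m, snd u + (3*int m+4)*4^m))"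
  by (auto simp: shift_def delta_def delta'_def algebra_simps image_iff)

lemma P_x: "p \<in> P m \<Longrightarrow> 0 \<le> fst p \<and> fst p \<le> 4^m - 1"
proof (induction m arbitrary: p)
  case 0 then show ?case by simp
next
  case (Suc m)
  then show ?case unfolding P_Suc_iff by fastforce
qed

lemma P_f: "p \<in> P m \<Longrightarrow> c > int m \<Longrightarrow> snd p - c*fst p \<le> 0 \<and> snd p - c*fst p \<ge> -(c - int m)*(4^m - 1)"
proof (induction m arbitrary: p c)
  case 0 then show ?case by simp
next
  case (Suc m)
  define q :: int where "q = 4^m"
  define k where "k = c - int m"
  have q1: "q \<ge> 1" unfolding q_def by simp
  have k2: "k \<ge> 2" using Suc.prems unfolding k_def by simp
  have kq: "k*q \<ge> 2*q" using q1 k2 by simp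
  have c: "c = int m + k" unfolding k_def by simp
  have p4: "(4::int)^Suc m = 4*q" unfolding q_def by simp
  from Suc.prems(1) consider "p \<in> P m" | u where "u \<in> P m" "p = (fst u + 3*q, snd u + (3*int m+4)*q)"
    unfolding P_Suc_iff q_def by blast
  then show ?case
  proof cases
    case 1
    from Suc.IH[OF 1, of c] Suc.prems have "snd p - c*fst p \<le> 0" "snd p - c*fst p \<ge> -k*(q - 1)"
      unfolding k_def q_def by auto
    moreover have "-(c - int (Suc m))*(4^Suc m - 1) = -4*(k*q) + k + 4*q - 1"
      unfolding p4 c by (simp add: algebra_simps)
    moreover have "-k*(q-1) = -(k*q) + k" by (simp add: algebra_simps)
    ultimately show ?thesis using kq q1 by (intro conjI) linarith+
  next
    case 2
    from Suc.IH[OF 2(1), of c] Suc.prems have h: "snd u - c*fst u \<le> 0" "snd u - c*fst u \<ge> -k*(q - 1)"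
      unfolding k_def q_def by auto
    have e: "snd p - c*fst p = (snd u - c*fst u) + (4 - 3*k)*q" using 2(2) c by (simp add: algebra_simps)
    have f1: "(4 - 3*k)*q \<le> 0" using k2 q1 by (simp add: mult_nonpos_nonneg)
    have f2: "-(c - int (Suc m))*(4^Suc m - 1) = -4*(k*q) + k + 4*q - 1"
      unfolding p4 c by (simp add: algebra_simps)
    have f3: "-k*(q-1) = -(k*q) + k" by (simp add: algebra_simps)
    have f4: "(4 - 3*k)*q = 4*q - 3*(k*q)" by (simp add: algebra_simps)
    have "snd p - c*fst p \<le> 0" "snd p - c*fst p \<ge> -(c - int (Suc m))*(4^Suc m - 1)"
      using e h kq q1 f1 f2 f3 f4 by (smt (verit))+
    then show ?thesis by simp
  qed
qed

lemma P_inj: "p \<in> P m \<Longrightarrow> q \<in> P m \<Longrightarrow> fst p = fst q \<Longrightarrow> p = q"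
proof (induction m arbitrary: p q)
  case 0 then show ?case by simp
next
  case (Suc m)
  have b: "\<And>u. u \<in> P m \<Longrightarrow> 0 \<le> fst u \<and> fst u \<le> 4^m - 1" by (rule P_x)
  from Suc.prems(1) consider "p \<in> P m" | u where "u \<in> P m" "p = (fst u + 3*4^m, snd u + (3*int m+4)*4^m)"
    unfolding P_Suc_iff by blast
  then show ?case
  proof cases
    case 1
    from Suc.prems(2) consider "q \<in> P m" | v where "v \<in> P m" "q = (fst v + 3*4^m, snd v + (3*int m+4)*4^m)"
      unfolding P_Suc_iff by blast
    then show ?thesis
    proof cases
      case 1 then show ?thesis using Suc.IH \<open>p \<in> P m\<close> Suc.prems by blast
    next
      case 2 then show ?thesis using b[OF 2(1)] b[OF \<open>p \<in> P m\<close>] Suc.prems(3) by auto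
    qed
  next
    case 2
    from Suc.prems(2) consider "q \<in> P m" | v where "v \<in> P m" "q = (fst v + 3*4^m, snd v + (3*int m+4)*4^m)"
      unfolding P_Suc_iff by blast
    then show ?thesis
    proof cases
      case 1 then show ?thesis using b[OF 2(1)] b[OF 1] 2 Suc.prems(3) by auto
    next
      case 3: 2
      have "u = v" using Suc.IH[OF 2(1) 3(1)] 2(2) 3(2) Suc.prems(3) by auto
      then show ?thesis using 2(2) 3(2) by simp
    qed
  qed
qed

lemma P_slope: "p \<in> P m \<Longrightarrow> q \<in> P m \<Longrightarrow> fst p < fst q \<Longrightarrow> snd q - snd p < (int m + 1)*(fst q - fst p)"
proof (induction m arbitrary: p q)
  case 0 then show ?case by simp
next
  case (Suc m)
  have b: "\<And>u. u \<in> P m \<Longrightarrow> 0 \<le> fst u \<and> fst u \<le> 4^m - 1" by (rule P_x)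
  have f: "\<And>u. u \<in> P m \<Longrightarrow> snd u - (int m + 2)*fst u \<le> 0 \<and> snd u - (int m + 2)*fst u \<ge> -2*(4^m - 1)"
    using P_f[of _ m "int m + 2"] by auto
  from Suc.prems(1) consider "p \<in> P m" | u where "u \<in> P m" "p = (fst u + 3*4^m, snd u + (3*int m+4)*4^m)"
    unfolding P_Suc_iff by blast
  then show ?case
  proof cases
    case 1
    from Suc.prems(2) consider "q \<in> P m" | v where "v \<in> P m" "q = (fst v + 3*4^m, snd v + (3*int m+4)*4^m)"
      unfolding P_Suc_iff by blast
    then show ?thesis
    proof cases
      case 1 then show ?thesis using Suc.IH[OF \<open>p \<in> P m\<close> 1 Suc.prems(3)] Suc.prems(3)
        by (simp add: algebra_simps)
    next
      case 2
      have "snd q - snd p - (int m + 2)*(fst q - fst p) = (snd v - (int m + 2)*fst v) - (snd p - (int m + 2)*fst p) - 2*4^m"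
        using 2(2) by (simp add: algebra_simps)
      then have "snd q - snd p - (int m + 2)*(fst q - fst p) < 0"
        using f[OF 2(1)] f[OF \<open>p \<in> P m\<close>] by (smt (verit))
      then show ?thesis by (simp add: algebra_simps)
    qed
  next
    case 2
    from Suc.prems(2) consider "q \<in> P m" | v where "v \<in> P m" "q = (fst v + 3*4^m, snd v + (3*int m+4)*4^m)"
      unfolding P_Suc_iff by blast
    then show ?thesis
    proof cases
      case 1 then show ?thesis using b[OF 2(1)] b[OF 1] 2 Suc.prems(3) by auto
    next
      case 3: 2
      have "fst u < fst v" using 2(2) 3(2) Suc.prems(3) by simp
      from Suc.IH[OF 2(1) 3(1) this] have "snd v - snd u < (int m + 1)*(fst v - fst u)" .
      moreover have "(int m + 1)*(fst v - fst u) \<le> (int (Suc m) + 1)*(fst v - fst u)"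
        using \<open>fst u < fst v\<close> by (intro mult_right_mono) auto
      ultimately show ?thesis using 2(2) 3(2) by simp
    qed
  qed
qed

lemma P_cross: "a \<in> P m \<Longrightarrow> u \<in> P m \<Longrightarrow>
   snd u + delta' (Suc m) - snd a > (int m + 1)*(fst u + delta (Suc m) - fst a)
   \<and> fst u + delta (Suc m) > fst a"
proof -
  assume a: "a \<in> P m" and u: "u \<in> P m"
  have f: "\<And>w. w \<in> P m \<Longrightarrow> snd w - (int m + 1)*fst w \<le> 0 \<and> snd w - (int m + 1)*fst w \<ge> -(4^m - 1)"
    using P_f[of _ m "int m + 1"] by auto
  have "snd u + delta' (Suc m) - snd a - (int m + 1)*(fst u + delta (Suc m) - fst a)
     = (snd u - (int m + 1)*fst u) - (snd a - (int m + 1)*fst a) + 4^m"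
    by (simp add: delta_def delta'_def algebra_simps)
  then show ?thesis using f[OF a] f[OF u] P_x[OF a] P_x[OF u] by (simp add: delta_def)
qed

lemma S_sub: "S k l \<subseteq> P (k + l - 1)"
proof (induction k l rule: S.induct)
  case (1 k l)
  show ?case
  proof (cases "k \<le> 2 \<or> l \<le> 2")
    case True then show ?thesis using zero_in_P by (simp add: S.simps)
  next
    case False
    then have e1: "k - 1 + l - 1 = k + l - 2" "k + (l - 1) - 1 = k + l - 2" "k + l - 1 = Suc (k + l - 2)" by auto
    have A: "S (k-1) l \<subseteq> P (k + l - 2)" using 1(1) False e1 by simp
    have B: "S k (l-1) \<subseteq> P (k + l - 2)" using 1(2) False e1 by simp
    have "S k l = S (k - 1) l \<union> shift (delta (k + l - 1)) (delta' (k + l - 1)) ` S k (l - 1)"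
      using False by (simp add: S.simps)
    then show ?thesis using A B unfolding e1(3) by auto
  qed
qed

lemma P_slope_real: "p \<in> P m \<Longrightarrow> q \<in> P m \<Longrightarrow> p \<noteq> q \<Longrightarrow>
  fst p \<noteq> fst q \<and> real_of_int (snd q - snd p) / real_of_int (fst q - fst p) < real m + 1"
proof -
  assume p: "p \<in> P m" and q: "q \<in> P m" and ne: "p \<noteq> q"
  have nx: "fst p \<noteq> fst q" using P_inj[OF p q] ne by blast
  have key: "\<And>a b. a \<in> P m \<Longrightarrow> b \<in> P m \<Longrightarrow> fst a < fst b \<Longrightarrow>
     real_of_int (snd b - snd a) / real_of_int (fst b - fst a) < real m + 1"
  proof -
    fix a b assume a: "a \<in> P m" and b: "b \<in> P m" and lt: "fst a < fst b"
    have "snd b - snd a < (int m + 1)*(fst b - fst a)" by (rule P_slope[OF a b lt])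
    then have "real_of_int (snd b - snd a) < real_of_int ((int m + 1)*(fst b - fst a))"
      by (simp only: of_int_less_iff)
    then have "real_of_int (snd b - snd a) < (real m + 1) * real_of_int (fst b - fst a)"
      by simp
    moreover have "real_of_int (fst b - fst a) > 0" using lt by simp
    ultimately show "real_of_int (snd b - snd a) / real_of_int (fst b - fst a) < real m + 1"
      by (simp add: pos_divide_less_eq)
  qed
  show ?thesis
  proof (cases "fst p < fst q")
    case True then show ?thesis using key[OF p q] nx by simp
  next
    case False
    then have "fst q < fst p" using nx by simp
    from key[OF q p this] have "real_of_int (snd p - snd q) / real_of_int (fst p - fst q) < real m + 1" .
    moreover have "real_of_int (snd p - snd q) / real_of_int (fst p - fst q)
        = real_of_int (snd q - snd p) / real_of_int (fst q - fst p)"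
    proof -
      have "real_of_int (snd p - snd q) = - real_of_int (snd q - snd p)"
           "real_of_int (fst p - fst q) = - real_of_int (fst q - fst p)" by simp_all
      then show ?thesis by (simp only: minus_divide_divide)
    qed
    ultimately show ?thesis using nx by simp
  qed
qed

lemma real_aux: "(s::real) < c \<Longrightarrow> d > 0 \<Longrightarrow> Y > c*d \<Longrightarrow> s*d < Y"
  by (smt (verit) mult_strict_right_mono)

lemma geom:
  assumes L: "L \<subseteq> P m" and R0: "R0 \<subseteq> P m"
  defines "R \<equiv> shift (delta (Suc m)) (delta' (Suc m)) ` R0"
  shows "strictly_right_of R L \<and> high_above R L"
proof -
  have cross: "\<And>a u. a \<in> L \<Longrightarrow> u \<in> R0 \<Longrightarrow>
     real_of_int (snd (shift (delta (Suc m)) (delta' (Suc m)) u) - snd a)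
       > (real m + 1) * real_of_int (fst (shift (delta (Suc m)) (delta' (Suc m)) u) - fst a)
     \<and> fst (shift (delta (Suc m)) (delta' (Suc m)) u) - fst a > 0"
  proof -
    fix a u assume a: "a \<in> L" and u: "u \<in> R0"
    from P_cross[of a m u] a u L R0 have
      h: "snd u + delta' (Suc m) - snd a > (int m + 1)*(fst u + delta (Suc m) - fst a)"
      "fst u + delta (Suc m) > fst a" by auto
    from h(1) have "real_of_int (snd u + delta' (Suc m) - snd a) > real_of_int ((int m + 1)*(fst u + delta (Suc m) - fst a))"
      by (simp only: of_int_less_iff)
    then have "real_of_int (snd u + delta' (Suc m) - snd a) > (real m + 1) * real_of_int (fst u + delta (Suc m) - fst a)"
      by simp
    moreover have "snd (shift (delta (Suc m)) (delta' (Suc m)) u) = snd u + delta' (Suc m)"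
       "fst (shift (delta (Suc m)) (delta' (Suc m)) u) = fst u + delta (Suc m)"
      by (simp_all add: shift_def)
    ultimately show "?thesis a u" using h(2) by simp
  qed
  have right: "strictly_right_of R L"
    unfolding strictly_right_of_def R_def using cross by force
  have part1: "\<forall>p\<in>R. \<forall>q\<in>R. p \<noteq> q \<longrightarrow> (\<forall>y\<in>L. strictly_below_line p q y)"
  proof (intro ballI impI)
    fix p q y assume p: "p \<in> R" and q: "q \<in> R" and ne: "p \<noteq> q" and y: "y \<in> L"
    obtain u where u: "u \<in> R0" "p = shift (delta (Suc m)) (delta' (Suc m)) u" using p R_def by blast
    obtain v where v: "v \<in> R0" "q = shift (delta (Suc m)) (delta' (Suc m)) v" using q R_def by blast
    have "u \<noteq> v" using u v ne by auto
    from P_slope_real[of u m v] this u v R0 have sl: "fst u \<noteq> fst v"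
      "real_of_int (snd v - snd u) / real_of_int (fst v - fst u) < real m + 1" by auto
    have d: "snd q - snd p = snd v - snd u" "fst q - fst p = fst v - fst u" "fst p \<noteq> fst q"
      using u v sl(1) by (auto simp: shift_def)
    from cross[OF y u(1)] u(2) have c:
      "real_of_int (snd p - snd y) > (real m + 1) * real_of_int (fst p - fst y)"
      "real_of_int (fst p - fst y) > 0" by auto
    have "real_of_int (snd q - snd p) / real_of_int (fst q - fst p) * real_of_int (fst p - fst y) < real_of_int (snd p - snd y)"
      using real_aux[OF sl(2) c(2) c(1)] d by simp
    moreover have "real_of_int (fst y - fst p) = - real_of_int (fst p - fst y)"
      "real_of_int (snd p - snd y) = real_of_int (snd p) - real_of_int (snd y)" by simp_all
    ultimately have "real_of_int (snd y) < real_of_int (snd p) +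
        real_of_int (snd q - snd p) / real_of_int (fst q - fst p) * real_of_int (fst y - fst p)"
      by (simp only: mult_minus_right)
    then show "strictly_below_line p q y" unfolding strictly_below_line_def using d(3) by blast
  qed
  have part2: "\<forall>p\<in>L. \<forall>q\<in>L. p \<noteq> q \<longrightarrow> (\<forall>x\<in>R. strictly_above_line p q x)"
  proof (intro ballI impI)
    fix p q x assume p: "p \<in> L" and q: "q \<in> L" and ne: "p \<noteq> q" and x: "x \<in> R"
    obtain u where u: "u \<in> R0" "x = shift (delta (Suc m)) (delta' (Suc m)) u" using x R_def by blast
    from P_slope_real[of p m q] ne p q L have sl: "fst p \<noteq> fst q"
      "real_of_int (snd q - snd p) / real_of_int (fst q - fst p) < real m + 1" by auto
    from cross[OF p u(1)] u(2) have c: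
      "real_of_int (snd x - snd p) > (real m + 1) * real_of_int (fst x - fst p)"
      "real_of_int (fst x - fst p) > 0" by auto
    have "real_of_int (snd q - snd p) / real_of_int (fst q - fst p) * real_of_int (fst x - fst p) < real_of_int (snd x - snd p)"
      using real_aux[OF sl(2) c(2) c(1)] by simp
    moreover have 
      "real_of_int (snd x - snd p) = real_of_int (snd x) - real_of_int (snd p)" by simp_all
    ultimately show "strictly_above_line p q x" unfolding strictly_above_line_def using sl(1)
      by linarith
  qed
  show ?thesis using right part1 part2 unfolding high_above_def by blast
qed

theorem proposition2:
  fixes k l :: nat
  assumes "k \<ge> 1" and "l \<ge> 1"
  shows "(k > 2 \<and> l > 2 \<longrightarrow>
            strictly_right_of (R_part k l) (L_part k l) \<and> high_above (R_part k l) (L_part k l))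
         \<and> S k l \<subseteq> P (k + l - 1)"
proof (rule conjI[OF impI])
  show "S k l \<subseteq> P (k + l - 1)" by (rule S_sub)
next
  assume h: "k > 2 \<and> l > 2"
  then have e1: "k - 1 + l - 1 = k + l - 2" "k + (l - 1) - 1 = k + l - 2" "k + l - 1 = Suc (k + l - 2)" by auto
  have A: "L_part k l \<subseteq> P (k + l - 2)" using S_sub[of "k-1" l] unfolding L_part_def e1(1) .
  have B: "S k (l-1) \<subseteq> P (k + l - 2)" using S_sub[of k "l-1"] unfolding e1(2) .
  have "R_part k l = shift (delta (Suc (k + l - 2))) (delta' (Suc (k + l - 2))) ` S k (l-1)"
    unfolding R_part_def e1(3) ..
  then show "strictly_right_of (R_part k l) (L_part k l) \<and> high_above (R_part k l) (L_part k l)"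
    using geom[OF A B] by simp
qed

end
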